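(* The system $\dot b_k=\frac{a_k^{(1)}}{1+\alpha b_{k+1}}-\frac{a_{k-1}^{(1)}}{1+\alpha b_{k-1}}$, $\dot a_k^{(j)}=a_k^{(j)}\Big(\frac{b_{k+j}}{1+\alpha b_{k+j}}-\frac{b_k}{1+\alpha b_k}\Big)+\Big(\frac{a_k^{(j+1)}}{1+\alpha b_{k+j+1}}-\frac{a_{k-1}^{(j+1)}}{1+\alpha b_{k-1}}\Big)$ ($1\le j\le m-1$), $\dot a_k^{(m)}=a_k^{(m)}\Big(\frac{b_{k+m}}{1+\alpha b_{k+m}}-\frac{b_k}{1+\alpha b_k}\Big)$ (subscripts modulo $N$) is Hamiltonian with respect to the quadratic bracket $\{\cdot,\cdot\}_2$ on $\mathbb R^{(m+1)N}(b,a^{(1)},\dots,a^{(m)})$ given below, with Hamilton function $H=\alpha^{-1}\sum_{k=1}^N\log(1+\alpha b_k)$.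
   Context: $N\ge2m+2$, $m\ge1$, $\alpha\neq0$ real; subscripts modulo $N$. Convention: $a_k^{(0)}=b_k$, $a_k^{(i)}=0$ for $i<0$ or $i>m$. The bracket $\{\cdot,\cdot\}_2$ has the following nonzero brackets between coordinates (up to antisymmetry), for $1\le i,j\le m$: $\{b_k,b_{k+1}\}_2=-a_k^{(1)}$; $\{b_k,a_{k+1}^{(j)}\}_2=-a_k^{(j+1)}$, $\{a_k^{(j)},b_{k+j+1}\}_2=-a_k^{(j+1)}$; $\{b_k,a_k^{(j)}\}_2=-b_ka_k^{(j)}$, $\{a_k^{(j)},b_{k+j}\}_2=-a_k^{(j)}b_{k+j}$; $\{a_k^{(i)},a_{k+i+1}^{(j)}\}_2=-a_k^{(i+j+1)}$; for $i<j$: $\{a_k^{(i)},a_k^{(j)}\}_2=-a_k^{(i)}a_k^{(j)}$, $\{a_k^{(j)},a_{k+j-i}^{(i)}\}_2=-a_k^{(j)}a_{k+j-i}^{(i)}$; for $i\le j$, $1\le\ell\le i$: $\{a_k^{(i)},a_{k+\ell}^{(j)}\}_2=-a_k^{(i)}a_{k+\ell}^{(j)}-a_k^{(j+\ell)}a_{k+\ell}^{(i-\ell)}$; for $i\le j$, $j-i+1\le\ell\le j$: $\{a_k^{(j)},a_{k+\ell}^{(i)}\}_2=-a_k^{(j)}a_{k+\ell}^{(i)}-a_k^{(i+\ell)}a_{k+\ell}^{(j-\ell)}$. Hamiltonian system: $\dot x=\{H,x\}$ for each coordinate $x$. *)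

theory Defs
  imports "HOL-Analysis.Analysis"
begin

text \<open>A phase point is x :: nat => nat => real, where x 0 k = b_k and x i k = a_k^(i)
  for 1 <= i <= m, 0 <= k < N.  Coordinate access with subscripts modulo N and the
  convention a^(i) = 0 for i > m:\<close>

definition A :: "nat \<Rightarrow> nat \<Rightarrow> (nat \<Rightarrow> nat \<Rightarrow> real) \<Rightarrow> nat \<Rightarrow> int \<Rightarrow> real" where
  "A m N x i k = (if i \<le> m then x i (nat (k mod int N)) else 0)"

text \<open>Basic bracket rule {a_k^(i), a_(k+d)^(j)}_2 (with a^(0) = b), as listed in the paper
  (the b-rules are exactly the instances with i = 0 or j = 0).  None = no rule listed.\<close>

definition rule :: "nat \<Rightarrow> nat \<Rightarrow> (nat \<Rightarrow> nat \<Rightarrow> real) \<Rightarrow> nat \<Rightarrow> nat \<Rightarrow> nat \<Rightarrow> int \<Rightarrow> real option" where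
  "rule m N x i j d k =
    (if i \<le> m \<and> j \<le> m then
       (if d = i + 1 then Some (- A m N x (i + j + 1) k)
        else if d = 0 \<and> i < j then Some (- A m N x i k * A m N x j k)
        else if j < i \<and> d = i - j then Some (- A m N x i k * A m N x j (k + int d))
        else if i \<le> j \<and> 1 \<le> d \<and> d \<le> i then
          Some (- A m N x i k * A m N x j (k + int d) - A m N x (j + d) k * A m N x (i - d) (k + int d))
        else if j \<le> i \<and> i - j + 1 \<le> d \<and> d \<le> i then
          Some (- A m N x i k * A m N x j (k + int d) - A m N x (j + d) k * A m N x (i - d) (k + int d))
        else None)
     else None)"

definition br2 :: "nat \<Rightarrow> nat \<Rightarrow> (nat \<Rightarrow> nat \<Rightarrow> real) \<Rightarrow> nat \<Rightarrow> int \<Rightarrow> nat \<Rightarrow> int \<Rightarrow> real" where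
  "br2 m N x i k j l =
    (case rule m N x i j (nat ((l - k) mod int N)) k of
       Some v \<Rightarrow> v
     | None \<Rightarrow> (case rule m N x j i (nat ((k - l) mod int N)) l of
                  Some v \<Rightarrow> - v
                | None \<Rightarrow> 0))"

definition Ham :: "nat \<Rightarrow> real \<Rightarrow> (nat \<Rightarrow> nat \<Rightarrow> real) \<Rightarrow> real" where
  "Ham N \<alpha> x = (1 / \<alpha>) * (\<Sum>k<N. ln (1 + \<alpha> * x 0 k))"

definition dHam :: "nat \<Rightarrow> real \<Rightarrow> (nat \<Rightarrow> nat \<Rightarrow> real) \<Rightarrow> nat \<Rightarrow> nat \<Rightarrow> real" where
  "dHam N \<alpha> x j l = deriv (\<lambda>t. Ham N \<alpha> (x(j := (x j)(l := t)))) (x j l)"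

definition vf :: "nat \<Rightarrow> nat \<Rightarrow> real \<Rightarrow> (nat \<Rightarrow> nat \<Rightarrow> real) \<Rightarrow> nat \<Rightarrow> int \<Rightarrow> real" where
  "vf m N \<alpha> x i k =
    (let b = A m N x 0; a = A m N x in
     if i = 0 then
       a 1 k / (1 + \<alpha> * b (k + 1)) - a 1 (k - 1) / (1 + \<alpha> * b (k - 1))
     else if i \<le> m - 1 then
       a i k * (b (k + int i) / (1 + \<alpha> * b (k + int i)) - b k / (1 + \<alpha> * b k))
       + (a (i + 1) k / (1 + \<alpha> * b (k + int i + 1)) - a (i + 1) (k - 1) / (1 + \<alpha> * b (k - 1)))
     else
       a m k * (b (k + int m) / (1 + \<alpha> * b (k + int m)) - b k / (1 + \<alpha> * b k)))"

end

theory Submission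
  imports Defs
begin

lemma A_per: "A m N x i (t + int N) = A m N x i t"
  by (simp add: A_def)

lemma rule_per: "rule m N x i j d (t + int N) = rule m N x i j d t"
proof -
  have "\<And>c. A m N x i (t + int N + c) = A m N x i (t + c)" for i
    by (metis A_per add.commute add.left_commute)
  then show ?thesis unfolding rule_def by (simp add: A_per)
qed

lemma br2_per: "br2 m N x 0 (t + int N) i k = br2 m N x 0 t i k"
proof -
  have "(k - (t + int N)) mod int N = (k - t) mod int N"
    proof -
    have "k - (t + int N) = (k - t) + (-1) * int N" by simp
    then show ?thesis by (simp only: mod_mult_self1)
  qed
  moreover have "(t + int N - k) mod int N = (t - k) mod int N"
    by (metis add.commute add_diff_eq mod_add_self1)
  ultimately show ?thesis unfolding br2_def by (simp only: rule_per)
qed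

lemma sum_shift1:
  assumes per: "\<And>t. f (t + int N) = (f t :: real)"
  shows "(\<Sum>s<N. f (c + 1 + int s)) = (\<Sum>s<N. f (c + int s))"
proof (cases N)
  case 0 then show ?thesis by simp
next
  case (Suc n)
  have "(\<Sum>s<N. f (c + int s)) = f c + (\<Sum>s<n. f (c + 1 + int s))"
    unfolding Suc sum.lessThan_Suc_shift by (simp add: add.assoc)
  moreover have "(\<Sum>s<N. f (c + 1 + int s)) = (\<Sum>s<n. f (c + 1 + int s)) + f (c + int N)"
    unfolding Suc sum.lessThan_Suc by (simp add: add.assoc)
  ultimately show ?thesis using per by simp
qed

lemma sum_shift:
  assumes per: "\<And>t. f (t + int N) = (f t :: real)"
  shows "(\<Sum>s<N. f (c + int s)) = (\<Sum>s<N. f (int s))"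
proof (induction c rule: int_induct[where k=0])
  case base then show ?case by simp
next
  case (step1 i) then show ?case using sum_shift1[of f N, OF per, of i] by simp
next
  case (step2 i) then show ?case using sum_shift1[of f N, OF per, of "i - 1"] by simp
qed

lemma dHam0:
  assumes "l < N" "1 + \<alpha> * x 0 l > 0" "\<alpha> \<noteq> 0"
  shows "dHam N \<alpha> x 0 l = 1 / (1 + \<alpha> * x 0 l)"
proof -
  define C where "C = (\<Sum>k\<in>{..<N}-{l}. ln (1 + \<alpha> * x 0 k))"
  have eq: "(\<lambda>t. Ham N \<alpha> (x(0 := (x 0)(l := t)))) = (\<lambda>t. (1/\<alpha>) * (ln (1 + \<alpha> * t) + C))"
  proof
    fix t
    have "(\<Sum>k<N. ln (1 + \<alpha> * (x(0 := (x 0)(l := t))) 0 k)) = ln (1 + \<alpha> * t) + C"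
      unfolding C_def using assms(1)
      by (subst sum.remove[of _ l]) (auto intro!: sum.cong)
    then show "Ham N \<alpha> (x(0 := (x 0)(l := t))) = (1/\<alpha>) * (ln (1 + \<alpha> * t) + C)"
      unfolding Ham_def by simp
  qed
  have "((\<lambda>t. (1/\<alpha>) * (ln (1 + \<alpha> * t) + C)) has_real_derivative (1/\<alpha>) * ((\<alpha>) / (1 + \<alpha> * x 0 l) + 0)) (at (x 0 l))"
    using assms by (auto intro!: derivative_eq_intros)
  then show ?thesis unfolding dHam_def eq using assms
    by (simp add: DERIV_imp_deriv)
qed

lemma dHamj:
  assumes "j \<noteq> 0"
  shows "dHam N \<alpha> x j l = 0"
proof -
  have "(\<lambda>t. Ham N \<alpha> (x(j := (x j)(l := t)))) = (\<lambda>t. Ham N \<alpha> x)"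
    using assms unfolding Ham_def by simp
  then show ?thesis unfolding dHam_def by simp
qed

lemma d1_eq: assumes "s < N" "2 \<le> N"
  shows "nat ((k - (k - 1 + int s)) mod int N) = (if s \<le> 1 then 1 - s else N + 1 - s)"
proof -
  have "k - (k - 1 + int s) = 1 - int s" by simp
  moreover have "(1 - int s) mod int N = (if s \<le> 1 then 1 - int s else int N + 1 - int s)"
  proof (cases "s \<le> 1")
    case True then show ?thesis using assms by (auto simp: mod_pos_pos_trivial)
  next
    case False
    have "1 - int s = (int N + 1 - int s) + (-1) * int N" by simp
    then have "(1 - int s) mod int N = (int N + 1 - int s) mod int N" by (simp only: mod_mult_self1)
    also have "\<dots> = int N + 1 - int s" using False assms by (intro mod_pos_pos_trivial) auto
    finally show ?thesis using False by simp
  qed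
  ultimately show ?thesis using assms by auto
qed

lemma d2_eq: assumes "s < N" "2 \<le> N"
  shows "nat ((k - 1 + int s - k) mod int N) = (if 1 \<le> s then s - 1 else N - 1)"
proof -
  have "k - 1 + int s - k = int s - 1" by simp
  moreover have "(int s - 1) mod int N = (if 1 \<le> s then int s - 1 else int N - 1)"
  proof (cases "1 \<le> s")
    case True then show ?thesis using assms by (auto simp: mod_pos_pos_trivial)
  next
    case False
    have "int s - 1 = (int N - 1) + (-1) * int N" using False by simp
    then have "(int s - 1) mod int N = (int N - 1) mod int N" by (simp only: mod_mult_self1)
    also have "\<dots> = int N - 1" using False assms by (intro mod_pos_pos_trivial) auto
    finally show ?thesis using False by simp
  qed
  ultimately show ?thesis using assms by auto
qed

lemma br2_val_pos:
  assumes "N \<ge> 2*m+2" "1 \<le> i" "i \<le> m" "s < N"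
  shows "br2 m N x 0 (k - 1 + int s) i k =
     (if s = 0 then - A m N x (i+1) (k-1) else 0)
   + (if s = 1 then - A m N x 0 k * A m N x i k else 0)
   + (if s = i+1 then A m N x i k * A m N x 0 (k + int i) else 0)
   + (if s = i+2 then A m N x (i+1) k else 0)"
proof -
  have N2: "2 \<le> N" using assms by simp
  consider "s = 0" | "s = 1" | "s = i+1" | "s = i+2" | "s \<noteq> 0 \<and> s \<noteq> 1 \<and> s \<noteq> i+1 \<and> s \<noteq> i+2" by blast
  then show ?thesis
  proof cases
    case 1 then show ?thesis using assms unfolding br2_def d1_eq[OF assms(4) N2] d2_eq[OF assms(4) N2]
      by (auto simp: rule_def)
  next
    case 2 then show ?thesis using assms unfolding br2_def d1_eq[OF assms(4) N2] d2_eq[OF assms(4) N2]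
      by (auto simp: rule_def)
  next
    case 3 then show ?thesis using assms unfolding br2_def d1_eq[OF assms(4) N2] d2_eq[OF assms(4) N2]
      by (auto simp: rule_def)
  next
    case 4 then show ?thesis using assms unfolding br2_def d1_eq[OF assms(4) N2] d2_eq[OF assms(4) N2]
      by (auto simp: rule_def)
  next
    case 5 then show ?thesis using assms unfolding br2_def d1_eq[OF assms(4) N2] d2_eq[OF assms(4) N2]
      by (auto simp: rule_def)
  qed
qed

lemma br2_val_zero:
  assumes "N \<ge> 2*m+2" "s < N"
  shows "br2 m N x 0 (k - 1 + int s) 0 k =
     (if s = 0 then - A m N x 1 (k-1) else 0)
   + (if s = 2 then A m N x 1 k else 0)"
proof -
  have N2: "2 \<le> N" using assms by simp
  consider "s = 0" | "s = 1" | "s = 2" | "s \<noteq> 0 \<and> s \<noteq> 1 \<and> s \<noteq> 2" by blast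
  then show ?thesis
  proof cases
    case 1 then show ?thesis using assms unfolding br2_def d1_eq[OF assms(2) N2] d2_eq[OF assms(2) N2]
      by (auto simp: rule_def)
  next
    case 2 then show ?thesis using assms unfolding br2_def d1_eq[OF assms(2) N2] d2_eq[OF assms(2) N2]
      by (auto simp: rule_def)
  next
    case 3 then show ?thesis using assms unfolding br2_def d1_eq[OF assms(2) N2] d2_eq[OF assms(2) N2]
      by (auto simp: rule_def)
  next
    case 4 then show ?thesis using assms unfolding br2_def d1_eq[OF assms(2) N2] d2_eq[OF assms(2) N2]
      by (auto simp: rule_def)
  qed
qed

theorem mainTheorem11:
  fixes m N :: nat and \<alpha> :: real and x :: "nat \<Rightarrow> nat \<Rightarrow> real"
  assumes "m \<ge> 1" and "N \<ge> 2 * m + 2" and "\<alpha> \<noteq> 0"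
    and "\<forall>k<N. 1 + \<alpha> * x 0 k > 0"
  shows "\<forall>i\<le>m. \<forall>k<N.
           vf m N \<alpha> x i (int k)
             = (\<Sum>j\<le>m. \<Sum>l<N. dHam N \<alpha> x j l * br2 m N x j (int l) i (int k))"
proof (intro allI impI)
  fix i k assume ik: "i \<le> m" "k < N"
  define W where "W t = 1 / (1 + \<alpha> * A m N x 0 t)" for t
  define F where "F t = W t * br2 m N x 0 t i (int k)" for t
  have Fper: "F (t + int N) = F t" for t by (simp add: F_def W_def A_per br2_per)
  have Ax: "A m N x 0 (int l) = x 0 l" if "l < N" for l
    using that by (simp add: A_def)
  obtain m' where m': "m = Suc m'" using assms(1) by (cases m) auto
  have "(\<Sum>j\<le>m. \<Sum>l<N. dHam N \<alpha> x j l * br2 m N x j (int l) i (int k))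
      = (\<Sum>l<N. dHam N \<alpha> x 0 l * br2 m N x 0 (int l) i (int k))"
    unfolding m' sum.atMost_Suc_shift by (simp add: dHamj)
  also have "\<dots> = (\<Sum>l<N. F (int l))"
    by (rule sum.cong) (auto simp: F_def W_def Ax dHam0 assms)
  also have "\<dots> = (\<Sum>s<N. F (int k - 1 + int s))"
    using sum_shift[of F N, OF Fper] by simp
  finally have R: "(\<Sum>j\<le>m. \<Sum>l<N. dHam N \<alpha> x j l * br2 m N x j (int l) i (int k))
      = (\<Sum>s<N. F (int k - 1 + int s))" .
  show "vf m N \<alpha> x i (int k) = (\<Sum>j\<le>m. \<Sum>l<N. dHam N \<alpha> x j l * br2 m N x j (int l) i (int k))"
  proof (cases "i = 0")
    case True
    have "F (int k - 1 + int s) =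
       (if s = 0 then W (int k - 1) * (- A m N x 1 (int k - 1)) else 0)
     + (if s = 2 then W (int k + 1) * A m N x 1 (int k) else 0)" if "s < N" for s
      using br2_val_zero[OF assms(2) that, of x "int k"] True unfolding F_def
      by (auto simp: algebra_simps)
    then have "(\<Sum>s<N. F (int k - 1 + int s)) = (\<Sum>s<N. (if s = 0 then W (int k - 1) * (- A m N x 1 (int k - 1)) else 0)
     + (if s = 2 then W (int k + 1) * A m N x 1 (int k) else 0))"
      by (intro sum.cong) auto
    also have "\<dots> = W (int k - 1) * (- A m N x 1 (int k - 1)) + W (int k + 1) * A m N x 1 (int k)"
      using assms(1,2) by (simp add: sum.distrib)
    finally show ?thesis unfolding R using True by (simp add: vf_def W_def Let_def)
  next
    case False
    have "F (int k - 1 + int s) =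
       (if s = 0 then W (int k - 1) * (- A m N x (i+1) (int k - 1)) else 0)
     + (if s = 1 then W (int k) * (- A m N x 0 (int k) * A m N x i (int k)) else 0)
     + (if s = i+1 then W (int k + int i) * (A m N x i (int k) * A m N x 0 (int k + int i)) else 0)
     + (if s = i+2 then W (int k + int i + 1) * A m N x (i+1) (int k) else 0)" if "s < N" for s
      using br2_val_pos[OF assms(2) _ ik(1) that, of x "int k"] False unfolding F_def
      by (auto simp: algebra_simps)
    then have "(\<Sum>s<N. F (int k - 1 + int s)) = (\<Sum>s<N. (if s = 0 then W (int k - 1) * (- A m N x (i+1) (int k - 1)) else 0)
     + (if s = 1 then W (int k) * (- A m N x 0 (int k) * A m N x i (int k)) else 0)
     + (if s = i+1 then W (int k + int i) * (A m N x i (int k) * A m N x 0 (int k + int i)) else 0)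
     + (if s = i+2 then W (int k + int i + 1) * A m N x (i+1) (int k) else 0))"
      by (intro sum.cong) auto
    also have "\<dots> = W (int k - 1) * (- A m N x (i+1) (int k - 1))
      + W (int k) * (- A m N x 0 (int k) * A m N x i (int k))
      + W (int k + int i) * (A m N x i (int k) * A m N x 0 (int k + int i))
      + W (int k + int i + 1) * A m N x (i+1) (int k)"
      using assms(1,2) ik by (simp add: sum.distrib)
    finally have S: "(\<Sum>s<N. F (int k - 1 + int s)) = \<dots>" .
    show ?thesis
    proof (cases "i \<le> m - 1")
      case True
      then show ?thesis unfolding R S using False by (simp add: vf_def W_def Let_def algebra_simps)
    next
      case nle: False
      then have im: "i = m" using ik by simp
      have "A m N x (i+1) t = 0" for t using im by (simp add: A_def)
      then show ?thesis unfolding R S using False nle im by (simp add: vf_def W_def Let_def algebra_simps)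
    qed
  qed
qed

end
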